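(* Let $k$ be a positive integer with $k\equiv0\pmod4$. Then $\Bbbk_{-1}[u,v]^{G_{1,k}}\cong\Bbbk[u,v]^{\frac1{2k}(1,k+1)}$; in particular it is a commutative cyclic quotient singularity.
   Context: $\Bbbk$ is algebraically closed of characteristic $0$; $\Bbbk_{-1}[u,v]=\Bbbk\langle u,v\rangle/(vu+uv)$; matrices $\begin{pmatrix}a&b\\c&d\end{pmatrix}$ act by $u\mapsto au+cv$, $v\mapsto bu+dv$. $G_{n,k}$ is generated by $\mathrm{diag}(\omega^{2k},\omega^{-2k})$ and $\begin{pmatrix}0&\omega^n\\\omega^n&0\end{pmatrix}$ for $\omega$ a primitive $(2nk)$th root of unity (so $G_{1,k}$ is cyclic, generated by the antidiagonal matrix with entries a primitive $2k$th root of unity). $\frac1m(1,b)$ is the cyclic group generated by $\mathrm{diag}(\omega_m,\omega_m^b)$ acting on the commutative polynomial ring $\Bbbk[u,v]$. *)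

theory Defs
  imports "HOL-Library.Poly_Mapping" "HOL-Computational_Algebra.Polynomial"
begin

text \<open>Polynomials in two variables u, v over a field: the element u^i v^j is the
  basis vector indexed by (i,j) (ordered monomials).  Elements are finitely
  supported coefficient functions.\<close>

type_synonym 'k bipoly = "(nat \<times> nat) \<Rightarrow>\<^sub>0 'k"

definition algebraically_closed :: "'k::field itself \<Rightarrow> bool" where
  "algebraically_closed _ \<longleftrightarrow> (\<forall>p::'k poly. degree p > 0 \<longrightarrow> (\<exists>x. poly p x = 0))"

definition bscal :: "'k::field \<Rightarrow> 'k bipoly \<Rightarrow> 'k bipoly" where
  "bscal c p = Poly_Mapping.map (\<lambda>x. c * x) p"

definition bone :: "'k::field bipoly" where "bone = Poly_Mapping.single (0,0) 1"
definition var_u :: "'k::field bipoly" where "var_u = Poly_Mapping.single (1,0) 1"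
definition var_v :: "'k::field bipoly" where "var_v = Poly_Mapping.single (0,1) 1"

text \<open>Multiplication in the skew polynomial ring k_{-1}[u,v] = k<u,v>/(vu+uv):
  (u^i v^j)(u^a v^b) = (-1)^(j a) u^(i+a) v^(j+b).\<close>
definition skew_mult :: "'k::field bipoly \<Rightarrow> 'k bipoly \<Rightarrow> 'k bipoly" where
  "skew_mult p q = (\<Sum>(i,j)\<in>Poly_Mapping.keys p. \<Sum>(a,b)\<in>Poly_Mapping.keys q.
      Poly_Mapping.single (i+a, j+b) ((-1)^(j*a) * Poly_Mapping.lookup p (i,j) * Poly_Mapping.lookup q (a,b)))"

definition comm_mult :: "'k::field bipoly \<Rightarrow> 'k bipoly \<Rightarrow> 'k bipoly" where
  "comm_mult p q = (\<Sum>(i,j)\<in>Poly_Mapping.keys p. \<Sum>(a,b)\<in>Poly_Mapping.keys q.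
      Poly_Mapping.single (i+a, j+b) (Poly_Mapping.lookup p (i,j) * Poly_Mapping.lookup q (a,b)))"

definition mpower :: "('k bipoly \<Rightarrow> 'k bipoly \<Rightarrow> 'k bipoly) \<Rightarrow> 'k::field bipoly \<Rightarrow> nat \<Rightarrow> 'k bipoly" where
  "mpower M x n = ((M x) ^^ n) bone"

text \<open>2x2 matrices (a,b,c,d) = [[a,b],[c,d]].\<close>
type_synonym 'k mat2 = "'k \<times> 'k \<times> 'k \<times> 'k"

definition mat2_mult :: "'k::field mat2 \<Rightarrow> 'k mat2 \<Rightarrow> 'k mat2" where
  "mat2_mult X Y = (case X of (a,b,c,d) \<Rightarrow> case Y of (e,f,g,h) \<Rightarrow>
      (a*e + b*g, a*f + b*h, c*e + d*g, c*f + d*h))"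

definition mat2_pow :: "'k::field mat2 \<Rightarrow> nat \<Rightarrow> 'k mat2" where
  "mat2_pow X n = ((mat2_mult X) ^^ n) (1,0,0,1)"

definition mat_act :: "('k bipoly \<Rightarrow> 'k bipoly \<Rightarrow> 'k bipoly) \<Rightarrow> 'k::field mat2 \<Rightarrow> 'k bipoly \<Rightarrow> 'k bipoly" where
  "mat_act M X f = (case X of (a,b,c,d) \<Rightarrow>
     (let U = bscal a var_u + bscal c var_v; V = bscal b var_u + bscal d var_v in
      \<Sum>(i,j)\<in>Poly_Mapping.keys f. bscal (Poly_Mapping.lookup f (i,j)) (M (mpower M U i) (mpower M V j))))"

definition cyc_invariants :: "('k bipoly \<Rightarrow> 'k bipoly \<Rightarrow> 'k bipoly) \<Rightarrow> 'k::field mat2 \<Rightarrow> 'k bipoly set" where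
  "cyc_invariants M X = {f. \<forall>n. mat_act M (mat2_pow X n) f = f}"

definition primitive_root :: "'k::field \<Rightarrow> nat \<Rightarrow> bool" where
  "primitive_root w m \<longleftrightarrow> w ^ m = 1 \<and> (\<forall>j. 0 < j \<and> j < m \<longrightarrow> w ^ j \<noteq> 1)"

text \<open>G_{1,k}: cyclic group generated by the antidiagonal matrix with entries w,
  w a primitive 2k-th root of unity (the diagonal generator diag(w^{2k},w^{-2k}) is trivial).\<close>
definition G1_gen :: "'k::field \<Rightarrow> 'k mat2" where
  "G1_gen w = (0, w, w, 0)"

text \<open>Generator of 1/m(1,b): diag(w, w^b).\<close>
definition cyc_diag_gen :: "'k::field \<Rightarrow> nat \<Rightarrow> 'k mat2" where
  "cyc_diag_gen w b = (w, 0, 0, w ^ b)"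

definition subalg_iso :: "('k bipoly \<Rightarrow> 'k bipoly \<Rightarrow> 'k bipoly) \<Rightarrow> 'k bipoly set \<Rightarrow>
    ('k bipoly \<Rightarrow> 'k bipoly \<Rightarrow> 'k bipoly) \<Rightarrow> 'k::field bipoly set \<Rightarrow> bool" where
  "subalg_iso M1 A M2 B \<longleftrightarrow> (\<exists>\<phi>. bij_betw \<phi> A B \<and> \<phi> bone = bone \<and>
     (\<forall>x\<in>A. \<forall>y\<in>A. \<phi> (x + y) = \<phi> x + \<phi> y \<and> \<phi> (M1 x y) = M2 (\<phi> x) (\<phi> y)) \<and>
     (\<forall>c. \<forall>x\<in>A. \<phi> (bscal c x) = bscal c (\<phi> x)))"

end

theory Submission
  imports Defs "HOL-Library.Product_Plus"
begin

type_synonym 'k bp = "(nat \<times> nat) \<Rightarrow>\<^sub>0 'k"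

abbreviation cst :: "'k::field \<Rightarrow> 'k bp" where "cst c \<equiv> Poly_Mapping.single 0 c"

lemma zero_pair: "((0::nat),(0::nat)) = 0" by (simp add: zero_prod_def)

lemma bone_eq: "(bone :: 'k::field bp) = 1"
  unfolding bone_def zero_pair by simp

lemma bscal_eq: "bscal c p = cst c * p"
  unfolding bscal_def by (rule mult_map_scale_conv_mult)

lemma lookup_cst_mult: "Poly_Mapping.lookup (cst c * p) x = c * Poly_Mapping.lookup p x"
  by (simp add: bscal_eq[symmetric] bscal_def map.rep_eq when_def)

lemma cst_mult: "cst (a * b) = cst a * (cst b :: 'k::field bp)"
  by (simp add: mult_single)

lemma cst_power: "cst (a ^ n) = (cst a :: 'k::field bp) ^ n"
  by (induction n) (simp_all add: cst_mult)

lemma single_expand: "(f :: 'k::field bp) = (\<Sum>x\<in>Poly_Mapping.keys f. Poly_Mapping.single x (Poly_Mapping.lookup f x))"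
proof (rule poly_mapping_eqI)
  fix y
  show "Poly_Mapping.lookup f y = Poly_Mapping.lookup (\<Sum>x\<in>Poly_Mapping.keys f. Poly_Mapping.single x (Poly_Mapping.lookup f x)) y"
    by (simp add: lookup_sum lookup_single when_def in_keys_iff)
qed

lemma mult_expand: "(p :: 'k::field bp) * q = (\<Sum>x\<in>Poly_Mapping.keys p. \<Sum>y\<in>Poly_Mapping.keys q.
    Poly_Mapping.single (x+y) (Poly_Mapping.lookup p x * Poly_Mapping.lookup q y))"
proof -
  have "p * q = (\<Sum>x\<in>Poly_Mapping.keys p. Poly_Mapping.single x (Poly_Mapping.lookup p x)) *
     (\<Sum>y\<in>Poly_Mapping.keys q. Poly_Mapping.single y (Poly_Mapping.lookup q y))"
    using single_expand[of p] single_expand[of q] by simp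
  also have "\<dots> = (\<Sum>x\<in>Poly_Mapping.keys p. \<Sum>y\<in>Poly_Mapping.keys q.
    Poly_Mapping.single (x+y) (Poly_Mapping.lookup p x * Poly_Mapping.lookup q y))" by (simp add: sum_product mult_single)
  finally show ?thesis .
qed

lemma comm_mult_eq: "comm_mult p q = (p * q :: 'k::field bp)"
  unfolding comm_mult_def mult_expand by (simp add: split_def plus_prod_def)

lemma mpower_comm: "mpower comm_mult x n = (x ^ n :: 'k::field bp)"
  unfolding mpower_def by (induction n) (simp_all add: bone_eq comm_mult_eq)

definition uu :: "'k::field bp" where "uu = Poly_Mapping.single (1,0) 1"
definition vv :: "'k::field bp" where "vv = Poly_Mapping.single (0,1) 1"

lemma uu_pow: "uu ^ i = Poly_Mapping.single (i,0) (1::'k::field)"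
  by (induction i) (simp_all add: uu_def mult_single zero_pair)
lemma vv_pow: "vv ^ i = Poly_Mapping.single (0,i) (1::'k::field)"
  by (induction i) (simp_all add: vv_def mult_single zero_pair)

lemma monom: "cst c * uu ^ i * vv ^ j = Poly_Mapping.single (i,j) (c::'k::field)"
  by (simp add: uu_pow vv_pow mult_single zero_pair)

definition ev :: "'k::field bp \<Rightarrow> 'k bp \<Rightarrow> 'k bp \<Rightarrow> 'k bp" where
  "ev U V f = (\<Sum>x\<in>Poly_Mapping.keys f. cst (Poly_Mapping.lookup f x) * U ^ fst x * V ^ snd x)"

lemma ev_superset:
  assumes "finite A" "Poly_Mapping.keys f \<subseteq> A"
  shows "ev U V f = (\<Sum>x\<in>A. cst (Poly_Mapping.lookup f x) * U ^ fst x * V ^ snd x)"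
  unfolding ev_def
  by (rule sum.mono_neutral_left) (use assms in \<open>auto simp: in_keys_iff\<close>)

lemma ev_add: "ev U V (f + g) = ev U V f + ev U V g"
proof -
  let ?A = "Poly_Mapping.keys f \<union> Poly_Mapping.keys g"
  have "ev U V (f + g) = (\<Sum>x\<in>?A. cst (Poly_Mapping.lookup (f+g) x) * U ^ fst x * V ^ snd x)"
    by (rule ev_superset) (auto simp: keys_add)
  also have "\<dots> = (\<Sum>x\<in>?A. cst (Poly_Mapping.lookup f x) * U ^ fst x * V ^ snd x)
     + (\<Sum>x\<in>?A. cst (Poly_Mapping.lookup g x) * U ^ fst x * V ^ snd x)"
    by (simp add: lookup_add single_add distrib_right sum.distrib)
  also have "\<dots> = ev U V f + ev U V g"
    by (simp add: ev_superset[symmetric])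
  finally show ?thesis .
qed

lemma ev_zero: "ev U V 0 = 0" by (simp add: ev_def)

lemma ev_sum: "ev U V (\<Sum>i\<in>I. F i) = (\<Sum>i\<in>I. ev U V (F i))"
  by (induction I rule: infinite_finite_induct) (simp_all add: ev_zero ev_add)

lemma ev_single: "ev U V (Poly_Mapping.single x c) = cst c * U ^ fst x * V ^ snd x"
  by (simp add: ev_def)

lemma ev_cst: "ev U V (cst c * f) = cst c * ev U V f"
proof -
  have "ev U V (cst c * f) = (\<Sum>x\<in>Poly_Mapping.keys f. cst (Poly_Mapping.lookup (cst c * f) x) * U ^ fst x * V ^ snd x)"
    by (rule ev_superset) (auto simp: in_keys_iff lookup_cst_mult)
  also have "\<dots> = cst c * ev U V f"
    by (simp add: ev_def sum_distrib_left lookup_cst_mult cst_mult mult.assoc)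
  finally show ?thesis .
qed

lemma ev_mult: "ev U V (f * g) = ev U V f * ev U V g"
proof -
  have "ev U V (f * g) = (\<Sum>x\<in>Poly_Mapping.keys f. \<Sum>y\<in>Poly_Mapping.keys g.
     cst (Poly_Mapping.lookup f x) * U ^ fst x * V ^ snd x * (cst (Poly_Mapping.lookup g y) * U ^ fst y * V ^ snd y))"
    apply (subst mult_expand)
    unfolding ev_sum ev_single
    by (intro sum.cong refl) (simp add: cst_mult power_add algebra_simps)
  also have "\<dots> = ev U V f * ev U V g"
    by (simp add: ev_def sum_product)
  finally show ?thesis .
qed

lemma ev_one: "ev U V 1 = 1"
  using ev_single[of U V 0 1] by simp

lemma ev_id: "ev uu vv f = f"
  unfolding ev_def monom prod.collapse by (rule single_expand[symmetric])

lemma ev_uu: "ev U V uu = U" by (simp add: uu_def ev_single)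
lemma ev_vv: "ev U V vv = V" by (simp add: vv_def ev_single)

definition hom :: "('k::field bp \<Rightarrow> 'k bp) \<Rightarrow> bool" where
  "hom H \<longleftrightarrow> (\<forall>p q. H (p + q) = H p + H q) \<and> (\<forall>p q. H (p * q) = H p * H q)
     \<and> (\<forall>c p. H (cst c * p) = cst c * H p) \<and> H 1 = 1"

lemma hom_add: "hom H \<Longrightarrow> H (p + q) = H p + H q" by (simp add: hom_def)
lemma hom_mult: "hom H \<Longrightarrow> H (p * q) = H p * H q" by (simp add: hom_def)
lemma hom_cst: "hom H \<Longrightarrow> H (cst c * p) = cst c * H p" unfolding hom_def by blast
lemma hom_one: "hom H \<Longrightarrow> H 1 = 1" by (simp add: hom_def)

lemma hom_ev: "hom (ev U V)"
  unfolding hom_def using ev_add ev_mult ev_cst ev_one by blast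

lemma hom_zero: "hom H \<Longrightarrow> H 0 = 0"
  by (metis add_cancel_right_right add_0 hom_add)

lemma hom_sum: "hom H \<Longrightarrow> H (\<Sum>i\<in>I. F i) = (\<Sum>i\<in>I. H (F i))"
  by (induction I rule: infinite_finite_induct) (simp_all add: hom_zero hom_add)

lemma hom_power: "hom H \<Longrightarrow> H (p ^ n) = H p ^ n"
  by (induction n) (simp_all add: hom_one hom_mult)

lemma hom_ev_comp: "hom H \<Longrightarrow> H (ev U V f) = ev (H U) (H V) f"
  unfolding ev_def
  by (simp add: hom_sum mult.assoc hom_cst hom_mult hom_power)


lemma mat_act_comm: "mat_act comm_mult (a,b,c,d) f = ev (cst a * uu + cst c * vv) (cst b * uu + cst d * vv) (f :: 'k::field bp)"
  unfolding mat_act_def Let_def bscal_eq var_u_def var_v_def comm_mult_eq mpower_comm ev_def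
    uu_def[symmetric] vv_def[symmetric]
  by (simp add: split_def mult.assoc)

lemma lookup_sum_single_id:
  "Poly_Mapping.lookup (\<Sum>x\<in>Poly_Mapping.keys f. Poly_Mapping.single x (Poly_Mapping.lookup f x * c x)) y
   = Poly_Mapping.lookup f y * (c y :: 'k::field)"
proof -
  have "Poly_Mapping.lookup (\<Sum>x\<in>Poly_Mapping.keys f. Poly_Mapping.single x (Poly_Mapping.lookup f x * c x)) y
     = (\<Sum>x\<in>Poly_Mapping.keys f. if x = y then Poly_Mapping.lookup f x * c x else 0)"
    by (simp add: lookup_sum lookup_single when_def)
  also have "\<dots> = Poly_Mapping.lookup f y * c y"
    by (simp add: in_keys_iff)
  finally show ?thesis .
qed

lemma lookup_sum_single_swap:
  "Poly_Mapping.lookup (\<Sum>x\<in>Poly_Mapping.keys f. Poly_Mapping.single (snd x, fst x) (Poly_Mapping.lookup f x * c x)) (a,b)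
   = Poly_Mapping.lookup f (b,a) * (c (b,a) :: 'k::field)"
proof -
  have e: "\<And>x. ((snd x, fst x) = (a,b)) = (x = (b,a))" by auto
  have "Poly_Mapping.lookup (\<Sum>x\<in>Poly_Mapping.keys f. Poly_Mapping.single (snd x, fst x) (Poly_Mapping.lookup f x * c x)) (a,b)
     = (\<Sum>x\<in>Poly_Mapping.keys f. if x = (b,a) then Poly_Mapping.lookup f x * c x else 0)"
    by (simp only: lookup_sum lookup_single when_def e)
  also have "\<dots> = Poly_Mapping.lookup f (b,a) * c (b,a)"
    by (simp add: in_keys_iff)
  finally show ?thesis .
qed

lemma ev_diag_lookup:
  "Poly_Mapping.lookup (ev (cst \<alpha> * uu) (cst \<beta> * vv) f) y = Poly_Mapping.lookup f y * (\<alpha> ^ fst y * \<beta> ^ snd y :: 'k::field)"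
proof -
  have "ev (cst \<alpha> * uu) (cst \<beta> * vv) f = (\<Sum>x\<in>Poly_Mapping.keys f. Poly_Mapping.single x (Poly_Mapping.lookup f x * (\<alpha> ^ fst x * \<beta> ^ snd x)))"
    unfolding ev_def
  proof (intro sum.cong refl)
    fix x :: "nat \<times> nat"
    have "cst (Poly_Mapping.lookup f x) * (cst \<alpha> * uu) ^ fst x * (cst \<beta> * vv) ^ snd x
       = cst (Poly_Mapping.lookup f x * (\<alpha> ^ fst x * \<beta> ^ snd x)) * uu ^ fst x * vv ^ snd x"
      by (simp add: power_mult_distrib cst_power cst_mult algebra_simps)
    then show "cst (Poly_Mapping.lookup f x) * (cst \<alpha> * uu) ^ fst x * (cst \<beta> * vv) ^ snd x
       = Poly_Mapping.single x (Poly_Mapping.lookup f x * (\<alpha> ^ fst x * \<beta> ^ snd x))"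
      by (simp add: monom)
  qed
  then show ?thesis by (simp add: lookup_sum_single_id)
qed

lemma ev_swap_lookup:
  "Poly_Mapping.lookup (ev (cst \<alpha> * vv) (cst \<beta> * uu) f) (a,b) = Poly_Mapping.lookup f (b,a) * (\<alpha> ^ b * \<beta> ^ a :: 'k::field)"
proof -
  have "ev (cst \<alpha> * vv) (cst \<beta> * uu) f = (\<Sum>x\<in>Poly_Mapping.keys f. Poly_Mapping.single (snd x, fst x) (Poly_Mapping.lookup f x * (\<alpha> ^ fst x * \<beta> ^ snd x)))"
    unfolding ev_def
  proof (intro sum.cong refl)
    fix x :: "nat \<times> nat"
    have "cst (Poly_Mapping.lookup f x) * (cst \<alpha> * vv) ^ fst x * (cst \<beta> * uu) ^ snd x
       = cst (Poly_Mapping.lookup f x * (\<alpha> ^ fst x * \<beta> ^ snd x)) * uu ^ snd x * vv ^ fst x"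
      by (simp add: power_mult_distrib cst_power cst_mult algebra_simps)
    then show "cst (Poly_Mapping.lookup f x) * (cst \<alpha> * vv) ^ fst x * (cst \<beta> * uu) ^ snd x
       = Poly_Mapping.single (snd x, fst x) (Poly_Mapping.lookup f x * (\<alpha> ^ fst x * \<beta> ^ snd x))"
      by (simp add: monom)
  qed
  then show ?thesis by (simp add: lookup_sum_single_swap)
qed


lemma bscal_single: "bscal c (Poly_Mapping.single x d) = Poly_Mapping.single x (c * d :: 'k::field)"
  by (simp add: bscal_eq mult_single)

lemma skew_single: "skew_mult (Poly_Mapping.single (i,j) c) (Poly_Mapping.single (a,b) d)
   = Poly_Mapping.single (i+a, j+b) ((-1)^(j*a) * c * (d::'k::field))"
  by (cases "c = 0"; cases "d = 0") (simp_all add: skew_mult_def)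

lemma mpower_skew_u: "mpower skew_mult (Poly_Mapping.single (1,0) c) n = Poly_Mapping.single (n,0) (c ^ n :: 'k::field)"
  unfolding mpower_def by (induction n) (simp_all add: bone_def skew_single)

lemma mpower_skew_v: "mpower skew_mult (Poly_Mapping.single (0,1) c) n = Poly_Mapping.single (0,n) (c ^ n :: 'k::field)"
  unfolding mpower_def by (induction n) (simp_all add: bone_def skew_single)

lemma bscal_zero: "bscal 0 p = 0" by (simp add: bscal_eq)

lemma mat_act_skew_diag:
  "Poly_Mapping.lookup (mat_act skew_mult (c,0,0,c) f) y = Poly_Mapping.lookup f y * (c ^ (fst y + snd y) :: 'k::field)"
proof -
  have "mat_act skew_mult (c,0,0,c) f = (\<Sum>x\<in>Poly_Mapping.keys f. Poly_Mapping.single x (Poly_Mapping.lookup f x * c ^ (fst x + snd x)))"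
    unfolding mat_act_def Let_def bscal_zero var_u_def var_v_def
    by (simp add: split_def bscal_single mpower_skew_u[simplified] mpower_skew_v[simplified] skew_single power_add)
  then show ?thesis by (simp add: lookup_sum_single_id)
qed

lemma mat_act_skew_anti:
  "Poly_Mapping.lookup (mat_act skew_mult (0,c,c,0) f) (a,b) = Poly_Mapping.lookup f (b,a) * ((-1)^(a*b) * c ^ (a + b) :: 'k::field)"
proof -
  have "mat_act skew_mult (0,c,c,0) f = (\<Sum>x\<in>Poly_Mapping.keys f. Poly_Mapping.single (snd x, fst x) (Poly_Mapping.lookup f x * ((-1)^(fst x * snd x) * c ^ (fst x + snd x))))"
    unfolding mat_act_def Let_def bscal_zero var_u_def var_v_def
    by (simp add: split_def bscal_single mpower_skew_u[simplified] mpower_skew_v[simplified] skew_single power_add mult.assoc)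
  then show ?thesis by (simp add: lookup_sum_single_swap mult.commute add.commute)
qed

lemma mat2_pow_anti: "mat2_pow (0,x,x,0) n = (if even n then (x^n,0,0,x^n) else (0,x^n,x^n,0) :: 'k::field mat2)"
  unfolding mat2_pow_def by (induction n) (auto simp: mat2_mult_def)

lemma mat2_pow_diag: "mat2_pow (x,0,0,y) n = ((x^n,0,0,y^n) :: 'k::field mat2)"
  unfolding mat2_pow_def by (induction n) (auto simp: mat2_mult_def)


lemma prim_pow:
  assumes "primitive_root w m" "m > 0"
  shows "w ^ n = 1 \<longleftrightarrow> m dvd n"
proof
  assume h: "w ^ n = 1"
  have "w ^ n = w ^ (m * (n div m) + n mod m)" by simp
  also have "\<dots> = (w ^ m) ^ (n div m) * w ^ (n mod m)"
    by (simp only: power_add power_mult)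
  finally have "w ^ (n mod m) = 1" using h assms(1) by (simp add: primitive_root_def)
  moreover have "n mod m < m" using assms(2) by simp
  moreover have P: "\<forall>j. 0 < j \<and> j < m \<longrightarrow> w ^ j \<noteq> 1" using assms(1) by (simp add: primitive_root_def)
  ultimately have "\<not> (0 < n mod m)" by (metis (no_types))
  then show "m dvd n" by (metis mod_eq_0_iff_dvd neq0_conv)
next
  assume "m dvd n"
  then obtain t where "n = m * t" by blast
  with assms(1) show "w ^ n = 1" by (simp add: primitive_root_def power_mult)
qed

definition sg :: "nat \<Rightarrow> 'k::field" where "sg b = (-1) ^ (\<Sum>i<b. i)"

lemma sg_add: "sg (a + b) = sg a * sg b * (-1) ^ (a * b)"
  by (induction b) (simp_all add: sg_def power_add algebra_simps)

lemma sg_0: "sg 0 = 1" by (simp add: sg_def)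

lemma sg_sq: "sg b * sg b = (1::'k::field)"
  unfolding sg_def power_mult_distrib[symmetric] by simp

lemma sg_4: "sg (4 * e) = (1::'k::field)"
proof (induction e)
  case 0 then show ?case by (simp add: sg_0)
next
  case (Suc e)
  have e1: "sg (4 * Suc e) = (sg (4 + 4*e) :: 'k)" by simp
  have e2: "(sg (4 + 4*e) :: 'k) = sg 4 * sg (4*e) * (-1) ^ (4 * (4 * e))" by (rule sg_add)
  have e3: "(-1::'k) ^ (4 * (4 * e)) = 1" by (simp add: neg_one_even_power)
  have e4: "sg 4 = (1::'k)" by (simp add: sg_def lessThan_Suc numeral_eq_Suc)
  show ?case using Suc e1 e2 e3 e4 by simp
qed

lemma sg_key:
  assumes "4 dvd a + b"
  shows "sg b * (-1) ^ (a * b) = (sg a :: 'k::field)"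
proof -
  obtain e where e: "a + b = 4 * e" using assms by blast
  have "sg a * sg b * (-1) ^ (a * b) = (1::'k)" using sg_add[of a b] e sg_4[of e] by metis
  then have X: "sg a * (sg b * (-1) ^ (a * b)) = (1 :: 'k)" by (simp only: mult.assoc)
  have "sg b * (-1) ^ (a * b) = (sg a * sg a) * (sg b * (-1) ^ (a * b) :: 'k)" by (simp only: sg_sq mult_1)
  also have "\<dots> = sg a * (sg a * (sg b * (-1) ^ (a * b)))" by (simp only: mult.assoc)
  also have "\<dots> = sg a" by (simp only: X mult_1_right)
  finally show ?thesis .
qed

lemma sg_nz: "sg b \<noteq> (0::'k::field)" by (simp add: sg_def)


definition inS :: "'k::field \<Rightarrow> 'k bp \<Rightarrow> bool" where
  "inS \<xi> f \<longleftrightarrow> (\<forall>a b. Poly_Mapping.lookup f (a,b) = Poly_Mapping.lookup f (b,a) * ((-1)^(a*b) * \<xi>^(a+b)))"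

lemma inS_D: "inS (\<xi>::'k::field) f \<Longrightarrow> Poly_Mapping.lookup f (a,b) = Poly_Mapping.lookup f (b,a) * ((-1)^(a*b) * \<xi>^(a+b))"
  unfolding inS_def by (erule allE, erule allE, assumption)

lemma inS_sq:
  assumes "inS (\<xi>::'k::field) f"
  shows "Poly_Mapping.lookup f (a,b) * (\<xi>^(a+b))^2 = Poly_Mapping.lookup f (a,b)"
proof -
  have 1: "Poly_Mapping.lookup f (a,b) = Poly_Mapping.lookup f (b,a) * ((-1)^(a*b) * \<xi>^(a+b))"
    using assms by (rule inS_D)
  have 2: "Poly_Mapping.lookup f (b,a) = Poly_Mapping.lookup f (a,b) * ((-1)^(a*b) * \<xi>^(a+b))"
    using inS_D[OF assms, of b a] by (simp add: add.commute mult.commute)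
  have "Poly_Mapping.lookup f (a,b) = Poly_Mapping.lookup f (a,b) * (((-1)^(a*b) * (-1)^(a*b)) * (\<xi>^(a+b))^2)"
    by (subst 1, subst 2) (simp add: power2_eq_square algebra_simps)
  also have "(-1::'k)^(a*b) * (-1)^(a*b) = 1" by (simp add: power_mult_distrib[symmetric])
  finally have "Poly_Mapping.lookup f (a,b) = Poly_Mapping.lookup f (a,b) * (\<xi>^(a+b))^2"
    by (simp only: mult_1)
  then show ?thesis by (rule sym)
qed

lemma S_char: "cyc_invariants skew_mult (G1_gen \<xi>) = {f. inS \<xi> f}"
proof (intro set_eqI iffI)
  fix f assume "f \<in> cyc_invariants skew_mult (G1_gen \<xi>)"
  then have "mat_act skew_mult (mat2_pow (0,\<xi>,\<xi>,0) 1) f = f"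
    by (simp add: cyc_invariants_def G1_gen_def)
  then have eq: "mat_act skew_mult (0,\<xi>,\<xi>,0) f = f" by (simp add: mat2_pow_anti)
  have "Poly_Mapping.lookup f (a,b) = Poly_Mapping.lookup f (b,a) * ((-1)^(a*b) * \<xi>^(a+b))" for a b
    using mat_act_skew_anti[of \<xi> f a b] by (simp only: eq)
  then show "f \<in> {f. inS \<xi> f}" unfolding inS_def by (intro CollectI allI)
next
  fix f assume "f \<in> {f. inS \<xi> f}"
  then have S: "inS \<xi> f" by simp
  show "f \<in> cyc_invariants skew_mult (G1_gen \<xi>)"
    unfolding cyc_invariants_def G1_gen_def
  proof (intro CollectI allI poly_mapping_eqI)
    fix n :: nat and y :: "nat \<times> nat"
    obtain a b where y: "y = (a,b)" by fastforce
    define q where "q = \<xi>^(a+b)"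
    have sq: "Poly_Mapping.lookup f (a,b) * (q^2)^t = Poly_Mapping.lookup f (a,b)" for t
    proof (induction t)
      case (Suc t)
      have "Poly_Mapping.lookup f (a,b) * (q^2)^Suc t = (Poly_Mapping.lookup f (a,b) * q^2) * (q^2)^t"
        by (simp add: algebra_simps)
      also have "\<dots> = Poly_Mapping.lookup f (a,b) * (q^2)^t" by (simp only: q_def inS_sq[OF S])
      also have "\<dots> = Poly_Mapping.lookup f (a,b)" by (rule Suc)
      finally show ?case .
    qed simp
    have qn: "(\<xi>^n)^(a+b) = q^n" by (simp add: q_def power_mult[symmetric] mult.commute)
    show "Poly_Mapping.lookup (mat_act skew_mult (mat2_pow (0, \<xi>, \<xi>, 0) n) f) y = Poly_Mapping.lookup f y"
    proof (cases "even n")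
      case True
      then obtain t where n: "n = 2*t" by blast
      have "Poly_Mapping.lookup (mat_act skew_mult (mat2_pow (0, \<xi>, \<xi>, 0) n) f) y
          = Poly_Mapping.lookup f (a,b) * q^n"
        using True by (simp add: mat2_pow_anti mat_act_skew_diag y qn)
      also have "\<dots> = Poly_Mapping.lookup f (a,b) * (q^2)^t" by (simp add: n power_mult)
      finally have "Poly_Mapping.lookup (mat_act skew_mult (mat2_pow (0, \<xi>, \<xi>, 0) n) f) y
          = Poly_Mapping.lookup f (a,b) * (q^2)^t" .
      then show ?thesis using sq y by simp
    next
      case False
      then obtain t where n: "n = 2*t+1" using oddE by blast
      have "Poly_Mapping.lookup (mat_act skew_mult (mat2_pow (0, \<xi>, \<xi>, 0) n) f) y
          = Poly_Mapping.lookup f (b,a) * ((-1)^(a*b) * q^n)"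
        using False by (simp add: mat2_pow_anti mat_act_skew_anti y qn)
      also have "\<dots> = (Poly_Mapping.lookup f (b,a) * ((-1)^(a*b) * q)) * (q^2)^t"
        by (simp add: n power_mult power_add algebra_simps power_mult_distrib[symmetric] flip: power_mult)
      also have "\<dots> = Poly_Mapping.lookup f (a,b) * (q^2)^t"
        using inS_D[OF S, of a b] by (simp add: q_def)
      finally show ?thesis using sq y by simp
    qed
  qed
qed


definition inS' :: "'k::field \<Rightarrow> 'k bp \<Rightarrow> bool" where
  "inS' \<xi> F \<longleftrightarrow> (\<forall>a b. Poly_Mapping.lookup F (a,b) = Poly_Mapping.lookup F (b,a) * \<xi>^(a+b))"

lemma inS'_D: "inS' (\<xi>::'k::field) F \<Longrightarrow> Poly_Mapping.lookup F (a,b) = Poly_Mapping.lookup F (b,a) * \<xi>^(a+b)"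
  unfolding inS'_def by (erule allE, erule allE, assumption)

definition Tset :: "nat \<Rightarrow> 'k::field bp set" where
  "Tset k = {F. \<forall>y\<in>Poly_Mapping.keys F. 2*k dvd fst y + (k+1) * snd y}"

lemma ev_diag_fix:
  "ev (cst \<alpha> * uu) (cst \<beta> * vv) F = F \<longleftrightarrow> (\<forall>y\<in>Poly_Mapping.keys F. \<alpha>^fst y * \<beta>^snd y = (1::'k::field))"
proof
  assume h: "ev (cst \<alpha> * uu) (cst \<beta> * vv) F = F"
  show "\<forall>y\<in>Poly_Mapping.keys F. \<alpha>^fst y * \<beta>^snd y = 1"
  proof
    fix y assume y: "y \<in> Poly_Mapping.keys F"
    have "Poly_Mapping.lookup F y * (\<alpha>^fst y * \<beta>^snd y) = Poly_Mapping.lookup F y"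
      using ev_diag_lookup[of \<alpha> \<beta> F y] by (simp only: h)
    with y show "\<alpha>^fst y * \<beta>^snd y = 1" by (simp add: in_keys_iff)
  qed
next
  assume h: "\<forall>y\<in>Poly_Mapping.keys F. \<alpha>^fst y * \<beta>^snd y = 1"
  show "ev (cst \<alpha> * uu) (cst \<beta> * vv) F = F"
  proof (rule poly_mapping_eqI)
    fix y
    show "Poly_Mapping.lookup (ev (cst \<alpha> * uu) (cst \<beta> * vv) F) y = Poly_Mapping.lookup F y"
      using h by (cases "y \<in> Poly_Mapping.keys F") (simp_all add: ev_diag_lookup in_keys_iff)
  qed
qed

lemma ev_swap_fix:
  "ev (cst \<xi> * vv) (cst \<xi> * uu) F = F \<longleftrightarrow> inS' (\<xi>::'k::field) F"
proof
  assume h: "ev (cst \<xi> * vv) (cst \<xi> * uu) F = F"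
  have "Poly_Mapping.lookup F (a,b) = Poly_Mapping.lookup F (b,a) * \<xi>^(a+b)" for a b
  proof -
    have "Poly_Mapping.lookup F (a,b) = Poly_Mapping.lookup F (b,a) * (\<xi>^b * \<xi>^a)"
      using ev_swap_lookup[of \<xi> \<xi> F a b] by (simp only: h)
    then show ?thesis by (simp add: power_add mult.commute)
  qed
  then show "inS' \<xi> F" unfolding inS'_def by (intro allI)
next
  assume h: "inS' \<xi> F"
  show "ev (cst \<xi> * vv) (cst \<xi> * uu) F = F"
  proof (rule poly_mapping_eqI)
    fix y :: "nat \<times> nat"
    obtain a b where y: "y = (a,b)" by fastforce
    show "Poly_Mapping.lookup (ev (cst \<xi> * vv) (cst \<xi> * uu) F) y = Poly_Mapping.lookup F y"
      unfolding y ev_swap_lookup using inS'_D[OF h, of a b] by (simp add: power_add mult.commute)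
  qed
qed

lemma T_char:
  assumes "primitive_root \<omega> (2*k)" "k > 0"
  shows "cyc_invariants comm_mult (cyc_diag_gen (\<omega>::'k::field) (k+1)) = Tset k"
proof -
  have act: "mat_act comm_mult (mat2_pow (cyc_diag_gen \<omega> (k+1)) n) F
      = ev (cst ((\<omega>^n)) * uu) (cst ((\<omega>^(k+1))^n) * vv) F" for n F
    by (simp add: cyc_diag_gen_def mat2_pow_diag mat_act_comm)
  have pw: "(\<omega>^n)^fst y * ((\<omega>^(k+1))^n)^snd y = (\<omega>^(fst y + (k+1)*snd y))^n" for n y
    by (simp add: power_add power_mult[symmetric] power_mult_distrib algebra_simps)
  show ?thesis
  proof (intro set_eqI iffI)
    fix F :: "'k bp" assume "F \<in> cyc_invariants comm_mult (cyc_diag_gen \<omega> (k+1))"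
    then have "ev (cst ((\<omega>^1)) * uu) (cst ((\<omega>^(k+1))^1) * vv) F = F"
      unfolding cyc_invariants_def act by blast
    then have "\<forall>y\<in>Poly_Mapping.keys F. \<omega>^(fst y + (k+1)*snd y) = 1"
      unfolding ev_diag_fix pw by simp
    then show "F \<in> Tset k" unfolding Tset_def using prim_pow[OF assms(1)] assms(2) by simp
  next
    fix F :: "'k bp" assume "F \<in> Tset k"
    then have "\<forall>y\<in>Poly_Mapping.keys F. \<omega>^(fst y + (k+1)*snd y) = 1"
      unfolding Tset_def using prim_pow[OF assms(1)] assms(2) by simp
    then show "F \<in> cyc_invariants comm_mult (cyc_diag_gen \<omega> (k+1))"
      unfolding cyc_invariants_def act ev_diag_fix pw by simp
  qed
qed

lemma xi_k:
  assumes "primitive_root \<xi> (2*k)" "k > 0"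
  shows "\<xi>^k = (-1::'k::field)"
proof -
  have "(\<xi>^k)^2 = 1" using assms(1) by (simp add: primitive_root_def power_mult[symmetric] mult.commute)
  moreover have "\<xi>^k \<noteq> 1" using assms unfolding primitive_root_def by simp
  ultimately show ?thesis by (simp add: power2_eq_1_iff)
qed

lemma delta_char:
  assumes "primitive_root \<xi> (2*k)" "k > 0"
  shows "ev (cst \<xi> * uu) (cst (-\<xi>) * vv) F = F \<longleftrightarrow> F \<in> Tset (k::nat)"
proof -
  have "\<xi>^a * (-\<xi>)^b = \<xi>^(a + (k+1)*b)" for a b
  proof -
    have "-\<xi> = \<xi>^k * \<xi>" using xi_k[OF assms] by simp
    then have "(-\<xi>)^b = \<xi>^(k*b) * \<xi>^b" by (simp add: power_mult_distrib power_mult)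
    then show ?thesis by (simp add: power_add algebra_simps)
  qed
  then show ?thesis unfolding ev_diag_fix Tset_def using prim_pow[OF assms(1)] assms(2) by simp
qed


definition phi1 :: "'k::field bp \<Rightarrow> 'k bp" where
  "phi1 f = (\<Sum>x\<in>Poly_Mapping.keys f. Poly_Mapping.single x (Poly_Mapping.lookup f x * sg (snd x)))"

lemma lookup_phi1: "Poly_Mapping.lookup (phi1 f) y = Poly_Mapping.lookup f y * sg (snd y)"
  unfolding phi1_def by (rule lookup_sum_single_id)

lemma keys_phi1: "Poly_Mapping.keys (phi1 f) = Poly_Mapping.keys f"
  by (auto simp: in_keys_iff lookup_phi1 sg_nz)

lemma phi1_phi1: "phi1 (phi1 f) = f"
  by (rule poly_mapping_eqI) (simp add: lookup_phi1 mult.assoc sg_sq)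

lemma phi1_add: "phi1 (f + g) = phi1 f + phi1 g"
  by (rule poly_mapping_eqI) (simp add: lookup_phi1 lookup_add algebra_simps)

lemma phi1_cst: "phi1 (cst c * f) = cst c * phi1 f"
  by (rule poly_mapping_eqI) (simp add: lookup_phi1 lookup_cst_mult mult.assoc)

lemma phi1_one: "phi1 1 = (1 :: 'k::field bp)"
  by (rule poly_mapping_eqI) (simp add: lookup_phi1 lookup_one when_def sg_0)

lemma phi1_sum: "phi1 (\<Sum>i\<in>I. F i) = (\<Sum>i\<in>I. phi1 (F i))"
  by (rule poly_mapping_eqI) (simp add: lookup_phi1 lookup_sum sum_distrib_right)

lemma phi1_single: "phi1 (Poly_Mapping.single z c) = Poly_Mapping.single z (c * sg (snd z))"
  by (rule poly_mapping_eqI) (simp add: lookup_phi1 lookup_single when_def)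

lemma sq_dvd:
  assumes "primitive_root \<xi> (2*k)" "k > 0" "4 dvd k" "(\<xi>^d)^2 = (1::'k::field)"
  shows "4 dvd d"
proof -
  have "\<xi>^(2*d) = 1" using assms(4) by (simp add: power_mult[symmetric] mult.commute)
  then have "2*k dvd 2*d" using prim_pow[OF assms(1)] assms(2) by simp
  then have "k dvd d" by simp
  then show ?thesis using assms(3) by (rule dvd_trans[rotated])
qed

lemma inS_4:
  assumes "primitive_root \<xi> (2*k)" "k > 0" "4 dvd k" "inS (\<xi>::'k::field) f" "Poly_Mapping.lookup f (a,b) \<noteq> 0"
  shows "4 dvd a + b"
proof -
  have "Poly_Mapping.lookup f (a,b) * (\<xi>^(a+b))^2 = Poly_Mapping.lookup f (a,b) * 1"
    using inS_sq[OF assms(4)] by simp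
  then have "(\<xi>^(a+b))^2 = 1" using assms(5) by simp
  then show ?thesis by (rule sq_dvd[OF assms(1-3)])
qed

lemma inS'_4:
  assumes "primitive_root \<xi> (2*k)" "k > 0" "4 dvd k" "inS' (\<xi>::'k::field) F" "Poly_Mapping.lookup F (a,b) \<noteq> 0"
  shows "4 dvd a + b"
proof -
  have "Poly_Mapping.lookup F (a,b) = Poly_Mapping.lookup F (b,a) * \<xi>^(a+b)" by (rule inS'_D[OF assms(4)])
  also have "Poly_Mapping.lookup F (b,a) = Poly_Mapping.lookup F (a,b) * \<xi>^(a+b)"
    using inS'_D[OF assms(4), of b a] by (simp add: add.commute)
  finally have "Poly_Mapping.lookup F (a,b) * (\<xi>^(a+b))^2 = Poly_Mapping.lookup F (a,b) * 1"
    by (simp add: power2_eq_square mult.assoc)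
  then have "(\<xi>^(a+b))^2 = 1" using assms(5) by simp
  then show ?thesis by (rule sq_dvd[OF assms(1-3)])
qed

lemma R1:
  assumes "primitive_root \<xi> (2*k)" "k > 0" "4 dvd k" "inS (\<xi>::'k::field) f"
  shows "inS' \<xi> (phi1 f)"
  unfolding inS'_def
proof (intro allI)
  fix a b
  show "Poly_Mapping.lookup (phi1 f) (a, b) = Poly_Mapping.lookup (phi1 f) (b, a) * \<xi> ^ (a + b)"
  proof (cases "Poly_Mapping.lookup f (b,a) = 0")
    case True
    then have "Poly_Mapping.lookup f (a,b) = 0" using inS_D[OF assms(4), of a b] by simp
    with True show ?thesis by (simp add: lookup_phi1)
  next
    case False
    have "4 dvd a + b" using inS_4[OF assms False] by (simp add: add.commute)
    then have key: "sg b * (-1) ^ (a * b) = (sg a :: 'k)" by (rule sg_key)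
    have "Poly_Mapping.lookup (phi1 f) (a, b) = Poly_Mapping.lookup f (b,a) * ((-1)^(a*b) * \<xi>^(a+b)) * sg b"
      using inS_D[OF assms(4), of a b] by (simp add: lookup_phi1)
    also have "\<dots> = Poly_Mapping.lookup f (b,a) * (sg b * (-1) ^ (a * b)) * \<xi>^(a+b)"
      by (simp add: algebra_simps)
    also have "\<dots> = Poly_Mapping.lookup (phi1 f) (b, a) * \<xi> ^ (a + b)"
      by (simp add: key lookup_phi1)
    finally show ?thesis .
  qed
qed

lemma R2:
  assumes "primitive_root \<xi> (2*k)" "k > 0" "4 dvd k" "inS' (\<xi>::'k::field) F"
  shows "inS \<xi> (phi1 F)"
  unfolding inS_def
proof (intro allI)
  fix a b
  show "Poly_Mapping.lookup (phi1 F) (a, b) = Poly_Mapping.lookup (phi1 F) (b, a) * ((-1)^(a*b) * \<xi> ^ (a + b))"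
  proof (cases "Poly_Mapping.lookup F (b,a) = 0")
    case True
    then have "Poly_Mapping.lookup F (a,b) = 0" using inS'_D[OF assms(4), of a b] by simp
    with True show ?thesis by (simp add: lookup_phi1)
  next
    case False
    have "4 dvd b + a" using inS'_4[OF assms False] .
    then have key0: "sg a * (-1) ^ (b * a) = (sg b :: 'k)" by (rule sg_key)
    have key: "sg a * (-1) ^ (a * b) = (sg b :: 'k)" using key0 by (simp only: mult.commute[of a b])
    have "Poly_Mapping.lookup (phi1 F) (a, b) = Poly_Mapping.lookup F (b,a) * \<xi>^(a+b) * sg b"
      using inS'_D[OF assms(4), of a b] by (simp add: lookup_phi1)
    also have "\<dots> = Poly_Mapping.lookup F (b,a) * (sg a * (-1) ^ (a * b)) * \<xi>^(a+b)"
      by (simp add: key algebra_simps)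
    also have "\<dots> = Poly_Mapping.lookup (phi1 F) (b, a) * ((-1)^(a*b) * \<xi> ^ (a + b))"
      by (simp add: lookup_phi1 algebra_simps)
    finally show ?thesis .
  qed
qed


lemma skew_expand: "skew_mult x y = (\<Sum>p\<in>Poly_Mapping.keys x. \<Sum>q\<in>Poly_Mapping.keys y.
   Poly_Mapping.single (p+q) ((-1)^(snd p * fst q) * Poly_Mapping.lookup x p * Poly_Mapping.lookup y q :: 'k::field))"
  unfolding skew_mult_def by (simp add: split_def plus_prod_def)

lemma R4:
  assumes "primitive_root \<xi> (2*k)" "k > 0" "4 dvd k" "inS (\<xi>::'k::field) x" "inS \<xi> y"
  shows "phi1 (skew_mult x y) = phi1 x * phi1 y"
proof -
  have "phi1 (skew_mult x y) = (\<Sum>p\<in>Poly_Mapping.keys x. \<Sum>q\<in>Poly_Mapping.keys y.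
     Poly_Mapping.single (p+q) (Poly_Mapping.lookup x p * sg (snd p) * (Poly_Mapping.lookup y q * sg (snd q))))"
    unfolding skew_expand phi1_sum phi1_single
  proof (intro sum.cong refl)
    fix p q assume p: "p \<in> Poly_Mapping.keys x" and q: "q \<in> Poly_Mapping.keys y"
    obtain i j where pij: "p = (i,j)" by fastforce
    obtain a b where qab: "q = (a,b)" by fastforce
    have "4 dvd a + b" using inS_4[OF assms(1-3) assms(5)] q qab by (simp add: in_keys_iff)
    then have ev: "even (a + b)" by (metis dvd_trans even_numeral)
    have e1: "sg (j + b) = sg j * sg b * (-1::'k) ^ (j * b)" by (rule sg_add)
    have e2: "(-1::'k) ^ (j * a) * (-1) ^ (j * b) = 1"
      using ev by (simp add: power_add[symmetric] distrib_left[symmetric])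
    have "(-1::'k) ^ (j * a) * Poly_Mapping.lookup x p * Poly_Mapping.lookup y q * sg (j + b)
       = Poly_Mapping.lookup x p * sg j * (Poly_Mapping.lookup y q * sg b) * ((-1) ^ (j * a) * (-1) ^ (j * b))"
      by (simp only: e1) (simp add: algebra_simps)
    also have "\<dots> = Poly_Mapping.lookup x p * sg j * (Poly_Mapping.lookup y q * sg b)" by (simp add: e2)
    finally have eq: "(-1::'k) ^ (j * a) * Poly_Mapping.lookup x p * Poly_Mapping.lookup y q * sg (j + b)
       = Poly_Mapping.lookup x p * sg j * (Poly_Mapping.lookup y q * sg b)" .
    show "Poly_Mapping.single (p + q) ((-1) ^ (snd p * fst q) * Poly_Mapping.lookup x p * Poly_Mapping.lookup y q * sg (snd (p + q)))
      = Poly_Mapping.single (p + q) (Poly_Mapping.lookup x p * sg (snd p) * (Poly_Mapping.lookup y q * sg (snd q)))"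
      using eq by (simp only: pij qab fst_conv snd_conv add_Pair)
  qed
  also have "\<dots> = phi1 x * phi1 y"
    by (simp add: mult_expand keys_phi1 lookup_phi1)
  finally show ?thesis .
qed


lemma hom_uminus: "hom H \<Longrightarrow> H (- p) = - H p"
proof -
  assume h: "hom H"
  have "H (- p) + H p = H (- p + p)" by (rule hom_add[OF h, symmetric])
  also have "\<dots> = 0" by (simp add: hom_zero[OF h])
  finally show ?thesis by (simp add: eq_neg_iff_add_eq_0)
qed
lemma hom_diff: "hom H \<Longrightarrow> H (p - q) = H p - H q"
proof -
  assume h: "hom H"
  have "H (p - q) = H (p + - q)" by (simp only: diff_conv_add_uminus)
  also have "\<dots> = H p + - H q" by (simp only: hom_add[OF h] hom_uminus[OF h])
  finally show ?thesis by (simp only: diff_conv_add_uminus)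
qed
lemma ev_diff: "ev U V (p - q) = ev U V p - ev U V q"
  by (rule hom_diff[OF hom_ev])

definition c2 :: "'k::field_char_0 bp" where "c2 = cst (1/2)"
lemma c2c2: "c2 + c2 = (1::'k::field_char_0 bp)"
proof -
  have "c2 + c2 = cst (1/2 + 1/2 :: 'k)" unfolding c2_def by (rule single_add[symmetric])
  also have "(1/2 + 1/2 :: 'k) = 1" by simp
  finally show ?thesis by simp
qed

definition psi :: "'k::field_char_0 bp \<Rightarrow> 'k bp" where "psi = ev (uu + vv) (uu - vv)"
definition psi' :: "'k::field_char_0 bp \<Rightarrow> 'k bp" where "psi' = ev (c2 * (uu + vv)) (c2 * (uu - vv))"
definition hh :: "'k::field_char_0 \<Rightarrow> 'k bp \<Rightarrow> 'k bp" where "hh \<xi> = ev (cst \<xi> * vv) (cst \<xi> * uu)"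
definition dd :: "'k::field_char_0 \<Rightarrow> 'k bp \<Rightarrow> 'k bp" where "dd \<xi> = ev (cst \<xi> * uu) (cst (-\<xi>) * vv)"

lemma c2_twice: "c2 * (p + p) = (p :: 'k::field_char_0 bp)"
  by (simp only: distrib_left distrib_right[symmetric] c2c2 mult_1_left)
lemma c2_u2: "c2 * ((uu + vv) + (uu - vv)) = (uu :: 'k::field_char_0 bp)"
proof -
  have "(uu + vv) + (uu - vv) = (uu + uu :: 'k bp)" by simp
  then show ?thesis by (simp only: c2_twice)
qed
lemma c2_v2: "c2 * ((uu + vv) - (uu - vv)) = (vv :: 'k::field_char_0 bp)"
proof -
  have "(uu + vv) - (uu - vv) = (vv + vv :: 'k bp)" by simp
  then show ?thesis by (simp only: c2_twice)
qed
lemma c2_u: "c2 * (uu + vv) + c2 * (uu - vv) = (uu :: 'k::field_char_0 bp)"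
  by (simp only: distrib_left[symmetric] c2_u2)
lemma c2_v: "c2 * (uu + vv) - c2 * (uu - vv) = (vv :: 'k::field_char_0 bp)"
  by (simp only: right_diff_distrib[symmetric] c2_v2)

lemma ev_uminus: "ev U V (- p) = - ev U V p"
  by (rule hom_uminus[OF hom_ev])

lemma ev_comp: "ev U V (ev U' V' f) = ev (ev U V U') (ev U V V') f"
  by (rule hom_ev_comp[OF hom_ev])

lemma psi'_psi: "psi' (psi F) = F"
proof -
  have "psi' (psi F) = ev (psi' (uu + vv)) (psi' (uu - vv)) F"
    unfolding psi_def psi'_def by (rule ev_comp)
  also have "psi' (uu + vv) = uu" unfolding psi'_def by (simp only: ev_add ev_uu ev_vv c2_u)
  also have "psi' (uu - vv) = vv" unfolding psi'_def by (simp only: ev_diff ev_uu ev_vv c2_v)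
  finally show ?thesis by (simp only: ev_id)
qed

lemma psi_psi': "psi (psi' F) = F"
proof -
  have "psi (psi' F) = ev (psi (c2 * (uu + vv))) (psi (c2 * (uu - vv))) F"
    unfolding psi_def psi'_def by (rule ev_comp)
  also have "psi (c2 * (uu + vv)) = uu" unfolding psi_def c2_def
    by (simp only: ev_cst ev_add ev_uu ev_vv c2_u2[unfolded c2_def])
  also have "psi (c2 * (uu - vv)) = vv" unfolding psi_def c2_def
    by (simp only: ev_cst ev_diff ev_uu ev_vv c2_v2[unfolded c2_def])
  finally show ?thesis by (simp only: ev_id)
qed

lemma conj1: "hh \<xi> (psi F) = psi (dd \<xi> F)"
proof -
  have "hh \<xi> (psi F) = ev (cst \<xi> * vv + cst \<xi> * uu) (cst \<xi> * vv - cst \<xi> * uu) F"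
    unfolding hh_def psi_def by (simp only: ev_comp ev_add ev_diff ev_uu ev_vv)
  also have "\<dots> = ev (cst \<xi> * (uu + vv)) (- (cst \<xi> * (uu - vv))) F"
  proof -
    have a1: "cst \<xi> * vv + cst \<xi> * uu = cst \<xi> * (uu + vv)" by (simp add: algebra_simps)
    have a2: "cst \<xi> * vv - cst \<xi> * uu = - (cst \<xi> * (uu - vv))" by (simp add: algebra_simps)
    show ?thesis by (simp only: a1 a2)
  qed
  also have "\<dots> = psi (dd \<xi> F)"
  proof -
    have m: "cst (-\<xi>) * vv = - (cst \<xi> * vv)" by (simp add: single_uminus)
    show ?thesis unfolding dd_def psi_def ev_comp m ev_uminus ev_cst ev_uu ev_vv ..
  qed
  finally show ?thesis .
qed

lemma conj2: "psi' (hh \<xi> G) = dd \<xi> (psi' G)"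
proof -
  have "psi' (hh \<xi> G) = ev (cst \<xi> * (c2 * (uu - vv))) (cst \<xi> * (c2 * (uu + vv))) G"
    unfolding hh_def psi'_def by (simp only: ev_comp ev_cst ev_uu ev_vv)
  also have "\<dots> = ev (c2 * (cst \<xi> * uu + - (cst \<xi> * vv))) (c2 * (cst \<xi> * uu - - (cst \<xi> * vv))) G"
  proof -
    have b1: "cst \<xi> * (c2 * (uu - vv)) = c2 * (cst \<xi> * uu + - (cst \<xi> * vv))" by (simp add: algebra_simps)
    have b2: "cst \<xi> * (c2 * (uu + vv)) = c2 * (cst \<xi> * uu - - (cst \<xi> * vv))" by (simp add: algebra_simps)
    show ?thesis by (simp only: b1 b2)
  qed
  also have "\<dots> = dd \<xi> (psi' G)"
    unfolding dd_def psi'_def c2_def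
    by (simp only: ev_comp ev_cst ev_add ev_diff ev_uu ev_vv single_uminus minus_mult_left ev_uminus)
  finally show ?thesis .
qed


theorem mainTheorem15:
  fixes k :: nat and \<xi> \<omega> :: "'k::field_char_0"
  assumes "algebraically_closed TYPE('k)"
    and "k > 0" and "k mod 4 = 0"
    and "primitive_root \<xi> (2 * k)"
    and "primitive_root \<omega> (2 * k)"
  shows "subalg_iso skew_mult (cyc_invariants skew_mult (G1_gen \<xi>))
                    comm_mult (cyc_invariants comm_mult (cyc_diag_gen \<omega> (k + 1)))
       \<and> (\<forall>x\<in>cyc_invariants skew_mult (G1_gen \<xi>). \<forall>y\<in>cyc_invariants skew_mult (G1_gen \<xi>).
             skew_mult x y = skew_mult y x)"
proof -
  have k0: "k > 0" by fact
  have k4: "4 dvd k" using assms(3) by (simp add: dvd_eq_mod_eq_0)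
  note pr = assms(4)
  have Seq: "cyc_invariants skew_mult (G1_gen \<xi>) = {f. inS \<xi> f}" by (rule S_char)
  have Teq: "cyc_invariants comm_mult (cyc_diag_gen \<omega> (k + 1)) = Tset k" by (rule T_char[OF assms(5) k0])
  define \<phi> where "\<phi> = (\<lambda>f. psi' (phi1 f :: 'k bp))"
  define \<Psi> where "\<Psi> = (\<lambda>F. phi1 (psi F :: 'k bp))"
  have ST: "\<phi> f \<in> Tset k" if "inS \<xi> f" for f
  proof -
    have "inS' \<xi> (phi1 f)" by (rule R1[OF pr k0 k4 that])
    then have "hh \<xi> (phi1 f) = phi1 f" unfolding hh_def by (simp add: ev_swap_fix)
    then have "dd \<xi> (\<phi> f) = \<phi> f" unfolding \<phi>_def by (metis conj2)
    then show ?thesis unfolding dd_def using delta_char[OF pr k0] by blast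
  qed
  have TS: "inS \<xi> (\<Psi> F)" if "F \<in> Tset k" for F
  proof -
    have "dd \<xi> F = F" unfolding dd_def using delta_char[OF pr k0] that by blast
    then have "hh \<xi> (psi F) = psi F" by (metis conj1)
    then have "inS' \<xi> (psi F)" unfolding hh_def by (simp add: ev_swap_fix)
    then show ?thesis unfolding \<Psi>_def by (rule R2[OF pr k0 k4])
  qed
  have bij: "bij_betw \<phi> {f. inS \<xi> f} (Tset k)"
  proof (rule bij_betw_byWitness[where f' = \<Psi>])
    show "\<forall>a\<in>{f. inS \<xi> f}. \<Psi> (\<phi> a) = a" by (simp add: \<phi>_def \<Psi>_def psi_psi' phi1_phi1)
    show "\<forall>a'\<in>Tset k. \<phi> (\<Psi> a') = a'" by (simp add: \<phi>_def \<Psi>_def psi'_psi phi1_phi1)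
    show "\<phi> ` {f. inS \<xi> f} \<subseteq> Tset k" using ST by blast
    show "\<Psi> ` Tset k \<subseteq> {f. inS \<xi> f}" using TS by blast
  qed
  have mult: "phi1 (skew_mult x y) = phi1 x * phi1 y" if "inS \<xi> x" "inS \<xi> y" for x y
    by (rule R4[OF pr k0 k4 that])
  have iso: "subalg_iso skew_mult {f. inS \<xi> f} comm_mult (Tset k)"
    unfolding subalg_iso_def
  proof (intro exI conjI ballI allI)
    show "bij_betw \<phi> {f. inS \<xi> f} (Tset k)" by (rule bij)
    show "\<phi> bone = bone" by (simp add: \<phi>_def bone_eq phi1_one psi'_def ev_one)
  next
    fix x y assume x: "x \<in> {f. inS \<xi> f}" and y: "y \<in> {f. inS \<xi> f}"
    show "\<phi> (x + y) = \<phi> x + \<phi> y" by (simp add: \<phi>_def phi1_add psi'_def ev_add)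
    show "\<phi> (skew_mult x y) = comm_mult (\<phi> x) (\<phi> y)"
      using x y by (simp add: \<phi>_def mult comm_mult_eq psi'_def ev_mult)
  next
    fix c x assume "x \<in> {f. inS \<xi> f}"
    show "\<phi> (bscal c x) = bscal c (\<phi> x)" by (simp add: \<phi>_def bscal_eq phi1_cst psi'_def ev_cst)
  qed
  have comm: "skew_mult x y = skew_mult y x" if "inS \<xi> x" "inS \<xi> y" for x y
  proof -
    have "skew_mult x y = phi1 (phi1 (skew_mult x y))" by (simp add: phi1_phi1)
    also have "\<dots> = phi1 (phi1 x * phi1 y)" by (simp add: mult that)
    also have "\<dots> = phi1 (phi1 y * phi1 x)" by (simp add: mult.commute)
    also have "\<dots> = phi1 (phi1 (skew_mult y x))" by (simp add: mult that)
    also have "\<dots> = skew_mult y x" by (simp add: phi1_phi1)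
    finally show ?thesis .
  qed
  show ?thesis unfolding Seq Teq using iso comm by blast
qed

end
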